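(* Let $k\ge2$ and let $\tau(x,y,h,b_1)$ be the formula $\alpha(x)\wedge\alpha(y)\wedge([h,b_1]=e)\wedge\beta(b_1)\wedge\forall v\,\forall w\,\big([v,b_1]=[w,b_1]=e\wedge\gamma(h,v,w,b_1)\rightarrow\exists u\,(\alpha(u)\wedge[v,y]=[w,x][v,[u,v]])\big)$, where $\alpha(x)=\forall y\,([y^{-1}xy,x]=e)$, $\beta(y)=\forall x\,(\alpha(x)\rightarrow y^{-1}xy=x^k)$, and $\gamma(x,y,z,t)$ is a group formula such that for every $b_1\in Ab$ and all $n,l,m\in\mathbb{Z}$, $BS(1,k)\models\gamma(b_1^n,b_1^l,b_1^m,b_1)$ iff $nl=m$. If $a_1\in A$ and $b_1\in Ab$, then for all $u,h\in BS(1,k)$: $BS(1,k)\models\tau(a_1,u,h,b_1)$ if and only if there exists $z\in\mathbb{Z}$ with $u=a_1^z$ and $h=b_1^z$.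
   Context: $BS(1,k)=\langle a,b\mid b^{-1}ab=a^k\rangle$, identified with $\mathbb{Z}[1/k]\rtimes\mathbb{Z}$ (pairs $(y,m)$, $y\in\mathbb{Z}[1/k]=\{zk^i:z,i\in\mathbb{Z}\}$, product $(y_1,m_1)(y_2,m_2)=(y_1+y_2k^{-m_1},m_1+m_2)$), with $a=(1,0)$, $b=(0,1)$; $a^y=(y,0)$. $A=\{a^y: y\in\mathbb{Z}[1/k]\}$ (the normal closure of $a$) and $Ab=\{a^yb:y\in\mathbb{Z}[1/k]\}$. The commutator is $[x,y]=x^{-1}y^{-1}xy$. *)

theory Defs
  imports Complex_Main "HOL-Algebra.Group"
begin

text \<open>The Baumslag--Solitar group BS(1,k) realised as Z[1/k] \<rtimes> Z:
  pairs (y,m) with y in Z[1/k] (a subring of the rationals), with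
  (y1,m1)(y2,m2) = (y1 + y2 k^(-m1), m1 + m2).\<close>

definition Zk :: "int \<Rightarrow> rat set" where
  "Zk k = {of_int z * (of_int k) powi i | z i. True}"

definition BS :: "int \<Rightarrow> (rat \<times> int) monoid" where
  "BS k = \<lparr> carrier = {(y, m). y \<in> Zk k},
            mult = (\<lambda>(y1, m1) (y2, m2). (y1 + y2 * (of_int k) powi (- m1), m1 + m2)),
            one = (0, 0) \<rparr>"

definition bs_a :: "int \<Rightarrow> rat \<times> int" where "bs_a k = (1, 0)"
definition bs_b :: "int \<Rightarrow> rat \<times> int" where "bs_b k = (0, 1)"

text \<open>A = {a^y : y in Z[1/k]} and Ab = {a^y b : y in Z[1/k]}, where a^y = (y,0).\<close>
definition bsA :: "int \<Rightarrow> (rat \<times> int) set" where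
  "bsA k = {(y, 0) | y. y \<in> Zk k}"

definition bsAb :: "int \<Rightarrow> (rat \<times> int) set" where
  "bsAb k = {(y, 0) \<otimes>\<^bsub>BS k\<^esub> bs_b k | y. y \<in> Zk k}"

definition bs_comm :: "int \<Rightarrow> rat \<times> int \<Rightarrow> rat \<times> int \<Rightarrow> rat \<times> int" where
  "bs_comm k x y = inv\<^bsub>BS k\<^esub> x \<otimes>\<^bsub>BS k\<^esub> inv\<^bsub>BS k\<^esub> y \<otimes>\<^bsub>BS k\<^esub> x \<otimes>\<^bsub>BS k\<^esub> y"

definition bs_alpha :: "int \<Rightarrow> rat \<times> int \<Rightarrow> bool" where
  "bs_alpha k x \<longleftrightarrow> (\<forall>y\<in>carrier (BS k).
      bs_comm k (inv\<^bsub>BS k\<^esub> y \<otimes>\<^bsub>BS k\<^esub> x \<otimes>\<^bsub>BS k\<^esub> y) x = \<one>\<^bsub>BS k\<^esub>)"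

definition bs_beta :: "int \<Rightarrow> rat \<times> int \<Rightarrow> bool" where
  "bs_beta k y \<longleftrightarrow> (\<forall>x\<in>carrier (BS k). bs_alpha k x \<longrightarrow>
      inv\<^bsub>BS k\<^esub> y \<otimes>\<^bsub>BS k\<^esub> x \<otimes>\<^bsub>BS k\<^esub> y = x [^]\<^bsub>BS k\<^esub> k)"

definition bs_tau :: "int \<Rightarrow> (rat \<times> int \<Rightarrow> rat \<times> int \<Rightarrow> rat \<times> int \<Rightarrow> rat \<times> int \<Rightarrow> bool)
    \<Rightarrow> rat \<times> int \<Rightarrow> rat \<times> int \<Rightarrow> rat \<times> int \<Rightarrow> rat \<times> int \<Rightarrow> bool" where
  "bs_tau k \<gamma> x y h b1 \<longleftrightarrow>
     bs_alpha k x \<and> bs_alpha k y \<and> bs_comm k h b1 = \<one>\<^bsub>BS k\<^esub> \<and> bs_beta k b1 \<and>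
     (\<forall>v\<in>carrier (BS k). \<forall>w\<in>carrier (BS k).
        bs_comm k v b1 = \<one>\<^bsub>BS k\<^esub> \<and> bs_comm k w b1 = \<one>\<^bsub>BS k\<^esub> \<and> \<gamma> h v w b1 \<longrightarrow>
        (\<exists>u\<in>carrier (BS k). bs_alpha k u \<and>
            bs_comm k v y = bs_comm k w x \<otimes>\<^bsub>BS k\<^esub> bs_comm k v (bs_comm k u v)))"

end

theory Submission imports Defs begin

context fixes k :: int assumes k2: "k \<ge> 2" begin

lemma knz: "(of_int k :: rat) \<noteq> 0" using k2 by simp

lemma kpow_add: "(of_int k :: rat) powi (m + n) = of_int k powi m * of_int k powi n"
  using knz by (simp add: power_int_add)

lemma Zk_int: "(of_int z :: rat) \<in> Zk k"
  unfolding Zk_def by (rule CollectI, rule exI[of _ z], rule exI[of _ 0]) simp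

lemma Zk_pow: "(of_int k :: rat) powi i \<in> Zk k"
  unfolding Zk_def by (rule CollectI, rule exI[of _ 1], rule exI[of _ i]) simp

lemma Zk_0: "0 \<in> Zk k" using Zk_int[of 0] by simp
lemma Zk_1: "1 \<in> Zk k" using Zk_int[of 1] by simp

lemma Zk_mult: "x \<in> Zk k \<Longrightarrow> y \<in> Zk k \<Longrightarrow> x * y \<in> Zk k"
proof -
  assume "x \<in> Zk k" "y \<in> Zk k"
  then obtain z1 i1 z2 i2 where x: "x = of_int z1 * of_int k powi i1" and y: "y = of_int z2 * of_int k powi i2"
    unfolding Zk_def by blast
  have "x * y = of_int (z1*z2) * of_int k powi (i1+i2)"
    using knz by (simp add: x y power_int_add)
  then show ?thesis unfolding Zk_def by blast
qed

lemma Zk_uminus: "x \<in> Zk k \<Longrightarrow> - x \<in> Zk k"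
  using Zk_mult[OF Zk_int[of "-1"]] by simp

lemma Zk_add_aux: "i1 \<ge> i2 \<Longrightarrow> (of_int z1 * of_int k powi i1 + of_int z2 * of_int k powi i2 :: rat) \<in> Zk k"
proof -
  assume "i1 \<ge> i2"
  then have "(of_int k :: rat) powi i1 = of_int k powi (i1 - i2) * of_int k powi i2"
    using knz by (simp add: power_int_add[symmetric])
  also have "(of_int k :: rat) powi (i1 - i2) = of_int (k ^ nat (i1 - i2))"
    using \<open>i1 \<ge> i2\<close> by (simp add: power_int_def)
  finally have "(of_int z1 * of_int k powi i1 + of_int z2 * of_int k powi i2 :: rat)
     = of_int (z1 * k ^ nat (i1 - i2) + z2) * of_int k powi i2"
    by (simp add: algebra_simps)
  then show ?thesis unfolding Zk_def by blast
qed

lemma Zk_add: "x \<in> Zk k \<Longrightarrow> y \<in> Zk k \<Longrightarrow> x + y \<in> Zk k"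
proof -
  assume "x \<in> Zk k" "y \<in> Zk k"
  then obtain z1 i1 z2 i2 where x: "x = of_int z1 * of_int k powi i1" and y: "y = of_int z2 * of_int k powi i2"
    unfolding Zk_def by blast
  show ?thesis
  proof (cases "i1 \<ge> i2")
    case True then show ?thesis using Zk_add_aux x y by simp
  next
    case False then have "i2 \<ge> i1" by simp
    then have "y + x \<in> Zk k" using Zk_add_aux[of i1 i2 z2 z1] x y by simp
    then show ?thesis by (simp add: add.commute)
  qed
qed

lemma Zk_diff: "x \<in> Zk k \<Longrightarrow> y \<in> Zk k \<Longrightarrow> x - y \<in> Zk k"
  using Zk_add[OF _ Zk_uminus] by simp

lemma car[simp]: "((y,m) \<in> carrier (BS k)) = (y \<in> Zk k)"
  by (simp add: BS_def)

lemma mul[simp]: "(y1,m1) \<otimes>\<^bsub>BS k\<^esub> (y2,m2) = (y1 + y2 * (of_int k) powi (- m1), m1 + m2)"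
  by (simp add: BS_def)

lemma one[simp]: "\<one>\<^bsub>BS k\<^esub> = (0,0)"
  by (simp add: BS_def)

lemma grp: "group (BS k)"
proof (rule groupI)
  fix x y assume "x \<in> carrier (BS k)" "y \<in> carrier (BS k)"
  then show "x \<otimes>\<^bsub>BS k\<^esub> y \<in> carrier (BS k)"
    by (cases x, cases y) (auto intro!: Zk_add Zk_mult Zk_pow)
next
  show "\<one>\<^bsub>BS k\<^esub> \<in> carrier (BS k)" using Zk_0 by simp
next
  fix x y z assume "x \<in> carrier (BS k)" "y \<in> carrier (BS k)" "z \<in> carrier (BS k)"
  then show "x \<otimes>\<^bsub>BS k\<^esub> y \<otimes>\<^bsub>BS k\<^esub> z = x \<otimes>\<^bsub>BS k\<^esub> (y \<otimes>\<^bsub>BS k\<^esub> z)"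
    using knz by (cases x, cases y, cases z) (simp add: kpow_add[symmetric] algebra_simps)
next
  fix x assume "x \<in> carrier (BS k)" then show "\<one>\<^bsub>BS k\<^esub> \<otimes>\<^bsub>BS k\<^esub> x = x"
    by (cases x) simp
next
  fix x assume "x \<in> carrier (BS k)"
  then obtain y m where x: "x = (y,m)" "y \<in> Zk k" by (cases x) auto
  show "\<exists>z\<in>carrier (BS k). z \<otimes>\<^bsub>BS k\<^esub> x = \<one>\<^bsub>BS k\<^esub>"
    apply (rule bexI[of _ "(- y * of_int k powi m, -m)"])
    using knz x by (auto intro!: Zk_mult Zk_uminus Zk_pow simp: power_int_minus_mult)
qed

lemma inv_eq[simp]: "y \<in> Zk k \<Longrightarrow> inv\<^bsub>BS k\<^esub> (y,m) = (- y * of_int k powi m, -m)"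
  apply (rule group.inv_equality[OF grp])
  using knz by (auto intro!: Zk_mult Zk_uminus Zk_pow simp: power_int_minus_mult)

lemma powA_nat: "y \<in> Zk k \<Longrightarrow> (y,0) [^]\<^bsub>BS k\<^esub> (n::nat) = (of_nat n * y, 0)"
  by (induction n) (auto simp: algebra_simps)

lemma powA: "y \<in> Zk k \<Longrightarrow> (y,0) [^]\<^bsub>BS k\<^esub> (z::int) = (of_int z * y, 0)"
proof -
  assume y: "y \<in> Zk k"
  have m: "of_int z * y \<in> Zk k" using Zk_mult[OF Zk_int[of "z"] y] by simp
  have m2: "- (of_int z * y) \<in> Zk k" using Zk_uminus[OF m] .
  show ?thesis
    using y m m2 by (simp add: int_pow_def2 powA_nat del: pow_nat)
qed

lemma snd_pow_nat: "g \<in> carrier (BS k) \<Longrightarrow> snd (g [^]\<^bsub>BS k\<^esub> (n::nat)) = int n * snd g"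
proof (induction n)
  case 0 then show ?case by simp
next
  case (Suc n)
  have "g [^]\<^bsub>BS k\<^esub> n \<in> carrier (BS k)" using Suc.prems monoid.nat_pow_closed[OF group.is_monoid[OF grp]] by blast
  then show ?case using Suc by (cases "g [^]\<^bsub>BS k\<^esub> n", cases g) (simp add: algebra_simps)
qed

lemma snd_pow: "g \<in> carrier (BS k) \<Longrightarrow> snd (g [^]\<^bsub>BS k\<^esub> (n::int)) = n * snd g"
proof -
  assume g: "g \<in> carrier (BS k)"
  have c: "g [^]\<^bsub>BS k\<^esub> (nat (-n)) \<in> carrier (BS k)" using g monoid.nat_pow_closed[OF group.is_monoid[OF grp]] by blast
  show ?thesis
  proof (cases "n < 0")
    case True
    then show ?thesis using c snd_pow_nat[OF g, of "nat (-n)"]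
      by (cases "g [^]\<^bsub>BS k\<^esub> (nat (-n))") (simp add: int_pow_def2 del: pow_nat)
  next
    case False
    then show ?thesis using snd_pow_nat[OF g, of "nat n"] by (simp add: int_pow_def2 del: pow_nat)
  qed
qed

lemma conj_eq: "e \<in> Zk k \<Longrightarrow> c \<in> Zk k \<Longrightarrow>
   inv\<^bsub>BS k\<^esub> (e,l) \<otimes>\<^bsub>BS k\<^esub> (c,0) \<otimes>\<^bsub>BS k\<^esub> (e,l) = (c * of_int k powi l, 0)"
  using knz by (simp add: algebra_simps power_int_minus_mult)

lemma comm1: "e \<in> Zk k \<Longrightarrow> d \<in> Zk k \<Longrightarrow>
   bs_comm k (e,l) (d,0) = (d * (1 - of_int k powi l), 0)"
  unfolding bs_comm_def
  using knz by (simp add: algebra_simps power_int_minus_mult)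

lemma comm2: "e \<in> Zk k \<Longrightarrow> d \<in> Zk k \<Longrightarrow>
   bs_comm k (d,0) (e,l) = (d * (of_int k powi l - 1), 0)"
  unfolding bs_comm_def
  using knz by (simp add: algebra_simps power_int_minus_mult)

lemma comm_one: "x \<in> carrier (BS k) \<Longrightarrow> y \<in> carrier (BS k) \<Longrightarrow>
   (bs_comm k x y = \<one>\<^bsub>BS k\<^esub>) = (x \<otimes>\<^bsub>BS k\<^esub> y = y \<otimes>\<^bsub>BS k\<^esub> x)"
proof -
  assume x: "x \<in> carrier (BS k)" and y: "y \<in> carrier (BS k)"
  interpret G: group "BS k" by (rule grp)
  have "bs_comm k x y = inv\<^bsub>BS k\<^esub> (y \<otimes>\<^bsub>BS k\<^esub> x) \<otimes>\<^bsub>BS k\<^esub> (x \<otimes>\<^bsub>BS k\<^esub> y)"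
    unfolding bs_comm_def using x y by (simp add: G.inv_mult_group G.m_assoc)
  moreover have "inv\<^bsub>BS k\<^esub> a \<otimes>\<^bsub>BS k\<^esub> b = \<one>\<^bsub>BS k\<^esub> \<longleftrightarrow> a = b"
    if a: "a \<in> carrier (BS k)" and b: "b \<in> carrier (BS k)" for a b
  proof
    assume h: "inv\<^bsub>BS k\<^esub> a \<otimes>\<^bsub>BS k\<^esub> b = \<one>\<^bsub>BS k\<^esub>"
    have "b = (a \<otimes>\<^bsub>BS k\<^esub> inv\<^bsub>BS k\<^esub> a) \<otimes>\<^bsub>BS k\<^esub> b" by (simp only: G.r_inv[OF a] G.l_one[OF b])
    also have "\<dots> = a \<otimes>\<^bsub>BS k\<^esub> (inv\<^bsub>BS k\<^esub> a \<otimes>\<^bsub>BS k\<^esub> b)" using a b by (simp only: G.m_assoc G.inv_closed)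
    also have "\<dots> = a" by (simp only: h G.r_one[OF a])
    finally show "a = b" by simp
  next
    assume "a = b" then show "inv\<^bsub>BS k\<^esub> a \<otimes>\<^bsub>BS k\<^esub> b = \<one>\<^bsub>BS k\<^esub>" using G.l_inv[OF a] by simp
  qed
  ultimately show ?thesis using x y by auto
qed

lemma kpow_eq1: "(of_int k :: rat) powi m = 1 \<Longrightarrow> m = 0"
proof (rule ccontr)
  assume h: "(of_int k :: rat) powi m = 1" and m: "m \<noteq> 0"
  have gt: "1 < k ^ n" if "n > 0" for n :: nat using k2 that by (simp add: one_less_power)
  show False
  proof (cases "m \<ge> 0")
    case True
    then have "(of_int k :: rat) powi m = of_int (k ^ nat m)" by (simp add: power_int_def)
    then have "k ^ nat m = 1" using h by (metis of_int_eq_1_iff)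
    then show False using gt[of "nat m"] m True by simp
  next
    case False
    then have "(of_int k :: rat) powi m = inverse (of_int (k ^ nat (-m)))" by (simp add: power_int_def power_inverse)
    then have "of_int (k ^ nat (-m)) = (1::rat)" using h by (metis inverse_eq_1_iff)
    then have "k ^ nat (-m) = 1" by (metis of_int_eq_1_iff)
    then show False using gt[of "nat (-m)"] m False by simp
  qed
qed

lemma alpha_iff: "x \<in> carrier (BS k) \<Longrightarrow> bs_alpha k x = (snd x = 0)"
proof
  assume x: "x \<in> carrier (BS k)" and a: "bs_alpha k x"
  obtain c m where xc: "x = (c,m)" "c \<in> Zk k" using x by (cases x) auto
  have "bs_comm k (inv\<^bsub>BS k\<^esub> (1,0) \<otimes>\<^bsub>BS k\<^esub> x \<otimes>\<^bsub>BS k\<^esub> (1,0)) x = \<one>\<^bsub>BS k\<^esub>"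
  proof -
    have "(1::rat, 0::int) \<in> carrier (BS k)" using Zk_1 by simp
    with a show ?thesis unfolding bs_alpha_def by blast
  qed
  moreover have "inv\<^bsub>BS k\<^esub> (1,0) \<otimes>\<^bsub>BS k\<^esub> x \<otimes>\<^bsub>BS k\<^esub> (1,0) = (c - 1 + of_int k powi (-m), m)"
    using xc Zk_1 by simp
  moreover have "c - 1 + of_int k powi (-m) \<in> Zk k"
    using xc Zk_1 by (auto intro!: Zk_add Zk_diff Zk_pow)
  ultimately have "(c - 1 + of_int k powi (-m), m) \<otimes>\<^bsub>BS k\<^esub> (c,m) = (c,m) \<otimes>\<^bsub>BS k\<^esub> (c - 1 + of_int k powi (-m), m)"
    using comm_one xc by simp
  then have e: "(c - 1 + t) + c * t = c + (c - 1 + t) * t" if "t = of_int k powi (-m)" for t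
    using that by simp
  have t1: "t = 1" if "(c - 1 + t) + c * t = c + (c - 1 + t) * t" for t :: rat
  proof -
    have "(t - 1) * (t - 1) = 0" using that by (simp add: algebra_simps)
    then show ?thesis by simp
  qed
  have "(of_int k :: rat) powi (-m) = 1" using t1[OF e[OF refl]] .
  then have "- m = 0" by (rule kpow_eq1)
  then show "snd x = 0" using xc by simp
next
  assume x: "x \<in> carrier (BS k)" and s: "snd x = 0"
  obtain c where xc: "x = (c,0)" "c \<in> Zk k" using x s by (cases x) auto
  show "bs_alpha k x"
    unfolding bs_alpha_def
  proof
    fix y assume "y \<in> carrier (BS k)"
    then obtain e l where y: "y = (e,l)" "e \<in> Zk k" by (cases y) auto
    show "bs_comm k (inv\<^bsub>BS k\<^esub> y \<otimes>\<^bsub>BS k\<^esub> x \<otimes>\<^bsub>BS k\<^esub> y) x = \<one>\<^bsub>BS k\<^esub>"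
      using xc y conj_eq comm2[of c "c * of_int k powi l" 0] Zk_mult[OF xc(2) Zk_pow]
      by simp
  qed
qed


lemma centr:
  assumes y1: "y1 \<in> Zk k" and g: "g \<in> carrier (BS k)"
    and c: "g \<otimes>\<^bsub>BS k\<^esub> (y1,1) = (y1,1) \<otimes>\<^bsub>BS k\<^esub> g"
  shows "g = (y1,1) [^]\<^bsub>BS k\<^esub> (snd g)"
proof -
  interpret G: group "BS k" by (rule grp)
  define b where "b = (y1, 1::int)"
  have b: "b \<in> carrier (BS k)" using y1 b_def by simp
  define n where "n = snd g"
  define p where "p = b [^]\<^bsub>BS k\<^esub> n"
  have p: "p \<in> carrier (BS k)" using b p_def by simp
  have sp: "snd p = n" using snd_pow[OF b] p_def b_def by simp
  have "p \<otimes>\<^bsub>BS k\<^esub> b = b [^]\<^bsub>BS k\<^esub> (n + 1)"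
    using G.int_pow_mult[OF b, of n 1] b p_def by simp
  also have "\<dots> = b \<otimes>\<^bsub>BS k\<^esub> p"
    using G.int_pow_mult[OF b, of 1 n] b p_def by (simp add: add.commute)
  finally have pc: "p \<otimes>\<^bsub>BS k\<^esub> b = b \<otimes>\<^bsub>BS k\<^esub> p" .
  obtain c1 where g1: "g = (c1, n)" using n_def by (cases g) auto
  obtain c2 where p1: "p = (c2, n)" using sp by (cases p) auto
  have e1: "c1 + y1 * of_int k powi (-n) = y1 + c1 * of_int k powi (-1)"
    using c g1 by simp
  have e2: "c2 + y1 * of_int k powi (-n) = y1 + c2 * of_int k powi (-1)"
    using pc p1 b_def by simp
  have "(c1 - c2) * (1 - of_int k powi (-1)) = 0"
    using e1 e2 by (simp add: algebra_simps)
  moreover have "(of_int k :: rat) powi (-1) \<noteq> 1" using kpow_eq1[of "-1"] by auto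
  ultimately have "c1 = c2" by simp
  then show ?thesis using g1 p1 p_def b_def n_def by simp
qed

lemma geo:
  assumes q: "q \<in> Zk k" and qi: "inverse q \<in> Zk k" and q0: "q \<noteq> 0"
  shows "\<exists>H\<in>Zk k. q powi n - 1 = (q - 1) * H"
proof (induction n rule: int_induct[where k=0])
  case base then show ?case using Zk_0 by (intro bexI[of _ 0]) auto
next
  case (step1 i)
  then obtain H where H: "H \<in> Zk k" "q powi i - 1 = (q - 1) * H" by blast
  have qq: "q powi (i+1) = q * q powi i" using q0 by (simp add: power_int_add)
  have "q powi (i+1) - 1 = q * (q powi i - 1) + (q - 1)" unfolding qq by (simp add: algebra_simps)
  also have "\<dots> = (q - 1) * (q * H + 1)" unfolding H(2) by (simp add: algebra_simps)
  finally have "q powi (i+1) - 1 = (q - 1) * (q * H + 1)" .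
  then show ?case using H q Zk_1 by (intro bexI[of _ "q * H + 1"]) (auto intro!: Zk_add Zk_mult)
next
  case (step2 i)
  then obtain H where H: "H \<in> Zk k" "q powi i - 1 = (q - 1) * H" by blast
  have "q powi (i-1) = q powi i * inverse q"
    using q0 by (simp add: power_int_diff divide_inverse)
  then have "q powi (i-1) - 1 = inverse q * (q powi i - 1) - inverse q * (q - 1)"
    using q0 by (simp add: algebra_simps)
  also have "\<dots> = (q - 1) * (inverse q * H - inverse q)" unfolding H(2) by (simp add: algebra_simps)
  finally have "q powi (i-1) - 1 = (q - 1) * (inverse q * H - inverse q)" .
  then show ?case using H qi by (intro bexI[of _ "inverse q * H - inverse q"]) (auto intro!: Zk_diff Zk_mult)
qed

lemma quad:
  assumes q: "q \<in> Zk k" and qi: "inverse q \<in> Zk k" and q0: "q \<noteq> 0"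
  shows "\<exists>P\<in>Zk k. q powi n - 1 - of_int n * (q - 1) = (q - 1)^2 * P"
proof (induction n rule: int_induct[where k=0])
  case base then show ?case using Zk_0 by (intro bexI[of _ 0]) auto
next
  case (step1 i)
  then obtain P where P: "P \<in> Zk k" "q powi i - 1 - of_int i * (q - 1) = (q - 1)^2 * P" by blast
  obtain H where H: "H \<in> Zk k" "q powi i - 1 = (q - 1) * H" using geo[OF q qi q0] by blast
  have qq: "q powi (i+1) = q * q powi i" using q0 by (simp add: power_int_add)
  have "q powi (i+1) - 1 - of_int (i+1) * (q - 1) = (q powi i - 1 - of_int i * (q - 1)) + (q - 1) * (q powi i - 1)"
    unfolding qq by (simp add: algebra_simps)
  also have "\<dots> = (q - 1)^2 * (P + H)" by (unfold P(2), unfold H(2), simp add: algebra_simps power2_eq_square)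
  finally show ?case using P H by (intro bexI[of _ "P + H"]) (auto intro!: Zk_add)
next
  case (step2 i)
  then obtain P where P: "P \<in> Zk k" "q powi i - 1 - of_int i * (q - 1) = (q - 1)^2 * P" by blast
  obtain H where H: "H \<in> Zk k" "q powi (i - 1) - 1 = (q - 1) * H" using geo[OF q qi q0] by blast
  have "q powi i = q powi (i - 1) * q" using q0 by (metis diff_add_cancel power_int_add_1)
  then have "q powi (i-1) - 1 - of_int (i-1) * (q - 1) = (q powi i - 1 - of_int i * (q - 1)) - (q - 1) * (q powi (i - 1) - 1)"
    by (simp add: algebra_simps)
  also have "\<dots> = (q - 1)^2 * P - (q - 1) * ((q - 1) * H)" by (simp only: P(2) H(2))
  also have "\<dots> = (q - 1)^2 * (P - H)" by (simp add: algebra_simps power2_eq_square)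
  finally show ?case using P H by (intro bexI[of _ "P - H"]) (auto intro!: Zk_diff)
qed

lemma kl_big: "int l + 1 \<le> k ^ l"
proof (induction l)
  case 0 then show ?case by simp
next
  case (Suc l)
  have "k ^ Suc l = k * k ^ l" by simp
  also have "\<dots> \<ge> 2 * k ^ l" using k2 by (intro mult_right_mono) auto
  finally show ?case using Suc by linarith
qed

lemma zero_crit:
  assumes e: "e \<in> Zk k" and h: "\<And>l::nat. l \<ge> 1 \<Longrightarrow> \<exists>f\<in>Zk k. e = f * (of_int k ^ l - 1)"
  shows "e = 0"
proof (rule ccontr)
  assume ne: "e \<noteq> 0"
  obtain z i where ez: "e = of_int z * of_int k powi i" using e unfolding Zk_def by blast
  have z0: "z \<noteq> 0" using ne ez by auto
  define l where "l = nat \<bar>z\<bar> + 1"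
  have l1: "l \<ge> 1" using l_def by simp
  have big: "\<bar>z\<bar> < k ^ l - 1" using kl_big[of l] l_def by simp
  obtain f where f: "f \<in> Zk k" "e = f * (of_int k ^ l - 1)" using h[OF l1] by blast
  obtain g j where fg: "f = of_int g * of_int k powi j" using f(1) unfolding Zk_def by blast
  have eq: "of_int z * of_int k powi i = of_int g * of_int k powi j * (of_int (k ^ l - 1) :: rat)"
    using ez f fg by simp
  have cop: "coprime (k ^ l - 1) (k ^ N)" for N
  proof -
    have "coprime (k ^ l - 1) k" using l1
      by (metis coprime_power_right_iff coprime_diff_one_left not_one_le_zero)
    then show ?thesis by simp
  qed
  have dv: "(k ^ l - 1) dvd z"
  proof (cases "i \<ge> j")
    case True
    have "(of_int k::rat) powi i = of_int k powi (i - j) * of_int k powi j" by (simp add: kpow_add[symmetric])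
    also have "(of_int k::rat) powi (i - j) = of_int (k ^ nat (i - j))" using True by (simp add: power_int_def)
    finally have "of_int (z * k ^ nat (i - j)) * of_int k powi j = of_int (g * (k ^ l - 1)) * (of_int k powi j :: rat)"
      using eq by (simp add: algebra_simps)
    then have "of_int (z * k ^ nat (i - j)) = (of_int (g * (k ^ l - 1)) :: rat)"
      using knz by simp
    then have "z * k ^ nat (i - j) = g * (k ^ l - 1)" by (simp only: of_int_eq_iff)
    then have "(k ^ l - 1) dvd z * k ^ nat (i - j)" by simp
    then show ?thesis using cop coprime_dvd_mult_left_iff by blast
  next
    case False
    have "(of_int k::rat) powi j = of_int k powi (j - i) * of_int k powi i" by (simp add: kpow_add[symmetric])
    also have "(of_int k::rat) powi (j - i) = of_int (k ^ nat (j - i))" using False by (simp add: power_int_def)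
    finally have "of_int z * of_int k powi i = of_int (g * k ^ nat (j - i) * (k ^ l - 1)) * (of_int k powi i :: rat)"
      using eq by (simp add: algebra_simps)
    then have "of_int z = (of_int (g * k ^ nat (j - i) * (k ^ l - 1)) :: rat)"
      using knz by simp
    then have "z = g * k ^ nat (j - i) * (k ^ l - 1)" by (simp only: of_int_eq_iff)
    then show ?thesis by simp
  qed
  have "\<bar>k ^ l - 1\<bar> \<le> \<bar>z\<bar>" using dvd_imp_le_int[OF z0 dv] .
  then show False using big by simp
qed


lemma pow_comm: "b \<in> carrier (BS k) \<Longrightarrow> b [^]\<^bsub>BS k\<^esub> (n::int) \<otimes>\<^bsub>BS k\<^esub> b = b \<otimes>\<^bsub>BS k\<^esub> b [^]\<^bsub>BS k\<^esub> n"
proof -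
  assume b: "b \<in> carrier (BS k)"
  interpret G: group "BS k" by (rule grp)
  have "b [^]\<^bsub>BS k\<^esub> n \<otimes>\<^bsub>BS k\<^esub> b = b [^]\<^bsub>BS k\<^esub> (n + 1)"
    using G.int_pow_mult[OF b, of n 1] b by simp
  also have "\<dots> = b \<otimes>\<^bsub>BS k\<^esub> b [^]\<^bsub>BS k\<^esub> n"
    using G.int_pow_mult[OF b, of 1 n] b by (simp add: add.commute)
  finally show ?thesis .
qed

lemma qfacts: "(of_int k :: rat) powi l \<in> Zk k \<and> inverse ((of_int k :: rat) powi l) \<in> Zk k \<and> (of_int k :: rat) powi l \<noteq> 0"
  using Zk_pow[of l] Zk_pow[of "-l"] knz by (simp add: power_int_minus)

lemma main_lemma:
  fixes \<gamma> :: "rat \<times> int \<Rightarrow> rat \<times> int \<Rightarrow> rat \<times> int \<Rightarrow> rat \<times> int \<Rightarrow> bool"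
    and a1 b1 :: "rat \<times> int"
  assumes hg: "\<And>b. b \<in> bsAb k \<Longrightarrow> \<forall>n l m :: int.
           \<gamma> (b [^]\<^bsub>BS k\<^esub> n) (b [^]\<^bsub>BS k\<^esub> l) (b [^]\<^bsub>BS k\<^esub> m) b \<longleftrightarrow> n * l = m"
    and a1: "a1 \<in> bsA k"
    and b1: "b1 \<in> bsAb k"
  shows "\<forall>u\<in>carrier (BS k). \<forall>h\<in>carrier (BS k).
           bs_tau k \<gamma> a1 u h b1 \<longleftrightarrow>
           (\<exists>z :: int. u = a1 [^]\<^bsub>BS k\<^esub> z \<and> h = b1 [^]\<^bsub>BS k\<^esub> z)"
proof (intro ballI)
  interpret G: group "BS k" by (rule grp)
  obtain c where a1c: "a1 = (c,0)" and c: "c \<in> Zk k" using a1 unfolding bsA_def by blast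
  obtain y1 where b1y: "b1 = (y1,1)" and y1: "y1 \<in> Zk k" using b1 unfolding bsAb_def bs_b_def by auto
  have a1C: "a1 \<in> carrier (BS k)" using a1c c by simp
  have b1C: "b1 \<in> carrier (BS k)" using b1y y1 by simp
  have gam: "\<gamma> (b1 [^]\<^bsub>BS k\<^esub> n) (b1 [^]\<^bsub>BS k\<^esub> l) (b1 [^]\<^bsub>BS k\<^esub> m) b1 \<longleftrightarrow> n * l = m" for n l m :: int
    using hg[OF b1] by blast
  have pC: "b1 [^]\<^bsub>BS k\<^esub> (n::int) \<in> carrier (BS k)" for n using b1C by simp
  have psnd: "snd (b1 [^]\<^bsub>BS k\<^esub> (n::int)) = n" for n using snd_pow[OF b1C] b1y by simp
  have pcomm: "bs_comm k (b1 [^]\<^bsub>BS k\<^esub> (n::int)) b1 = \<one>\<^bsub>BS k\<^esub>" for n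
    using comm_one[OF pC b1C] pow_comm[OF b1C] by simp
  have apow: "a1 [^]\<^bsub>BS k\<^esub> (z::int) = (of_int z * c, 0)" for z using powA[OF c] a1c by simp
  have pform: "\<exists>e. b1 [^]\<^bsub>BS k\<^esub> (n::int) = (e, n) \<and> e \<in> Zk k" for n
    using pC[of n] psnd[of n] by (cases "b1 [^]\<^bsub>BS k\<^esub> n") auto
  fix u h assume uC: "u \<in> carrier (BS k)" and hC: "h \<in> carrier (BS k)"
  show "bs_tau k \<gamma> a1 u h b1 \<longleftrightarrow> (\<exists>z :: int. u = a1 [^]\<^bsub>BS k\<^esub> z \<and> h = b1 [^]\<^bsub>BS k\<^esub> z)"
  proof
    assume tau: "bs_tau k \<gamma> a1 u h b1"
    have "bs_alpha k u" using tau unfolding bs_tau_def by blast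
    then obtain d where ud: "u = (d,0)" and d: "d \<in> Zk k"
      using alpha_iff[OF uC] uC by (cases u) auto
    have "bs_comm k h b1 = \<one>\<^bsub>BS k\<^esub>" using tau unfolding bs_tau_def by blast
    then have "h \<otimes>\<^bsub>BS k\<^esub> b1 = b1 \<otimes>\<^bsub>BS k\<^esub> h" using comm_one[OF hC b1C] by simp
    then have hn: "h = b1 [^]\<^bsub>BS k\<^esub> (snd h)" using centr[OF y1 hC] b1y by simp
    define n where "n = snd h"
    have key: "\<exists>f\<in>Zk k. of_int n * c - d = f * (of_int k ^ l - 1)" if l1: "l \<ge> 1" for l :: nat
    proof -
      define v where "v = b1 [^]\<^bsub>BS k\<^esub> (int l)"
      define w where "w = b1 [^]\<^bsub>BS k\<^esub> (n * int l)"
      have vC: "v \<in> carrier (BS k)" and wC: "w \<in> carrier (BS k)" using pC v_def w_def by auto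
      have "\<gamma> h v w b1" using gam[of n "int l" "n * int l"] hn n_def v_def w_def by simp
      moreover have "bs_comm k v b1 = \<one>\<^bsub>BS k\<^esub>" "bs_comm k w b1 = \<one>\<^bsub>BS k\<^esub>"
        using pcomm v_def w_def by auto
      ultimately obtain u' where u'C: "u' \<in> carrier (BS k)" and au': "bs_alpha k u'"
        and eq: "bs_comm k v u = bs_comm k w a1 \<otimes>\<^bsub>BS k\<^esub> bs_comm k v (bs_comm k u' v)"
        using tau vC wC unfolding bs_tau_def by blast
      obtain f where u'f: "u' = (f,0)" and f: "f \<in> Zk k"
        using alpha_iff[OF u'C] au' u'C by (cases u') auto
      obtain ev where v1: "v = (ev, int l)" and ev: "ev \<in> Zk k" using pform v_def by blast
      obtain ew where w1: "w = (ew, n * int l)" and ew: "ew \<in> Zk k" using pform w_def by blast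
      define q where "q = (of_int k :: rat) powi (int l)"
      have qZ: "q \<in> Zk k" "inverse q \<in> Zk k" "q \<noteq> 0" using qfacts[of "int l"] unfolding q_def by blast+
      have fq: "f * (q - 1) \<in> Zk k" using f qZ Zk_1 by (auto intro!: Zk_mult Zk_diff)
      have c1: "bs_comm k v u = (d * (1 - q), 0)" using comm1[OF ev d] v1 ud q_def by simp
      have qn: "of_int k powi (n * int l) = q powi n"
        unfolding q_def by (metis power_int_mult mult.commute)
      have c2: "bs_comm k w a1 = (c * (1 - q powi n), 0)"
        using comm1[OF ew c, of "n * int l"] w1 a1c qn by simp
      have c3: "bs_comm k u' v = (f * (q - 1), 0)" using comm2[OF ev f] v1 u'f q_def by simp
      have c4: "bs_comm k v (bs_comm k u' v) = (f * (q - 1) * (1 - q), 0)"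
        using comm1[OF ev fq] v1 c3 q_def by simp
      have e1: "d * (1 - q) = c * (1 - q powi n) + f * (q - 1) * (1 - q)"
        using eq c1 c2 c4 by simp
      obtain P where P: "P \<in> Zk k" "q powi n - 1 - of_int n * (q - 1) = (q - 1)^2 * P"
        using quad[OF qZ] by blast
      have qpn: "q powi n = 1 + of_int n * (q - 1) + (q - 1)^2 * P" using P(2) by (simp add: algebra_simps)
      have "(q - 1) * (of_int n * c - d) = (q - 1) * ((q - 1) * (- (c * P + f)))"
        using e1 unfolding qpn by (simp add: algebra_simps power2_eq_square)
      moreover have "q \<noteq> 1" using kpow_eq1[of "int l"] l1 q_def by auto
      ultimately have "of_int n * c - d = (q - 1) * (- (c * P + f))" by simp
      moreover have "q = of_int k ^ l" using q_def by simp
      moreover have "- (c * P + f) \<in> Zk k" by (rule Zk_uminus[OF Zk_add[OF Zk_mult[OF c P(1)] f]])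
      ultimately show ?thesis by (auto simp: mult.commute)
    qed
    have "of_int n * c - d \<in> Zk k" using c d by (auto intro!: Zk_diff Zk_mult Zk_int)
    then have "of_int n * c - d = 0" using zero_crit key by blast
    then have "u = a1 [^]\<^bsub>BS k\<^esub> n" using ud apow by simp
    then show "\<exists>z :: int. u = a1 [^]\<^bsub>BS k\<^esub> z \<and> h = b1 [^]\<^bsub>BS k\<^esub> z" using hn n_def by blast
  next
    assume "\<exists>z :: int. u = a1 [^]\<^bsub>BS k\<^esub> z \<and> h = b1 [^]\<^bsub>BS k\<^esub> z"
    then obtain z :: int where uz: "u = a1 [^]\<^bsub>BS k\<^esub> z" and hz: "h = b1 [^]\<^bsub>BS k\<^esub> z" by blast
    have u1: "u = (of_int z * c, 0)" using uz apow by simp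
    have A1: "bs_alpha k a1" using alpha_iff[OF a1C] a1c by simp
    have A2: "bs_alpha k u" using alpha_iff[OF uC] u1 by simp
    have A3: "bs_comm k h b1 = \<one>\<^bsub>BS k\<^esub>" using pcomm hz by simp
    have A4: "bs_beta k b1" unfolding bs_beta_def
    proof (intro ballI impI)
      fix x assume xC: "x \<in> carrier (BS k)" and ax: "bs_alpha k x"
      obtain c' where x1: "x = (c',0)" and c': "c' \<in> Zk k"
        using alpha_iff[OF xC] ax xC by (cases x) auto
      show "inv\<^bsub>BS k\<^esub> b1 \<otimes>\<^bsub>BS k\<^esub> x \<otimes>\<^bsub>BS k\<^esub> b1 = x [^]\<^bsub>BS k\<^esub> k"
        using conj_eq[OF y1 c', of 1] b1y x1 powA[OF c', of k] by (simp add: mult.commute)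
    qed
    have A5: "\<exists>u'\<in>carrier (BS k). bs_alpha k u' \<and>
            bs_comm k v u = bs_comm k w a1 \<otimes>\<^bsub>BS k\<^esub> bs_comm k v (bs_comm k u' v)"
      if vC: "v \<in> carrier (BS k)" and wC: "w \<in> carrier (BS k)"
        and cv: "bs_comm k v b1 = \<one>\<^bsub>BS k\<^esub>" and cw: "bs_comm k w b1 = \<one>\<^bsub>BS k\<^esub>"
        and gv: "\<gamma> h v w b1" for v w
    proof -
      have "v \<otimes>\<^bsub>BS k\<^esub> b1 = b1 \<otimes>\<^bsub>BS k\<^esub> v" using cv comm_one[OF vC b1C] by simp
      then have vl: "v = b1 [^]\<^bsub>BS k\<^esub> (snd v)" using centr[OF y1 vC] b1y by simp
      have "w \<otimes>\<^bsub>BS k\<^esub> b1 = b1 \<otimes>\<^bsub>BS k\<^esub> w" using cw comm_one[OF wC b1C] by simp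
      then have wm: "w = b1 [^]\<^bsub>BS k\<^esub> (snd w)" using centr[OF y1 wC] b1y by simp
      define l where "l = snd v"
      define m where "m = snd w"
      have "z * l = m" using gv gam[of z l m] hz vl wm l_def m_def by simp
      obtain ev where v1: "v = (ev, l)" and ev: "ev \<in> Zk k" using vC l_def by (cases v) auto
      obtain ew where w1: "w = (ew, m)" and ew: "ew \<in> Zk k" using wC m_def by (cases w) auto
      define q where "q = (of_int k :: rat) powi l"
      have qZ: "q \<in> Zk k" "inverse q \<in> Zk k" "q \<noteq> 0" using qfacts q_def by auto
      obtain P where P: "P \<in> Zk k" "q powi z - 1 - of_int z * (q - 1) = (q - 1)^2 * P"
        using quad[OF qZ] by blast
      define f where "f = - (c * P)"
      have f: "f \<in> Zk k" using f_def c P by (auto intro!: Zk_uminus Zk_mult)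
      have fq: "f * (q - 1) \<in> Zk k" using f qZ Zk_1 by (auto intro!: Zk_mult Zk_diff)
      have zc: "of_int z * c \<in> Zk k" using c by (auto intro!: Zk_mult Zk_int)
      have c1: "bs_comm k v u = (of_int z * c * (1 - q), 0)" using comm1[OF ev zc] v1 u1 q_def by simp
      have qn: "of_int k powi m = q powi z"
        unfolding q_def \<open>z * l = m\<close>[symmetric] by (metis power_int_mult mult.commute)
      have c2: "bs_comm k w a1 = (c * (1 - q powi z), 0)"
        using comm1[OF ew c, of m] w1 a1c qn by simp
      have c3: "bs_comm k (f,0) v = (f * (q - 1), 0)" using comm2[OF ev f] v1 q_def by simp
      have c4: "bs_comm k v (bs_comm k (f,0) v) = (f * (q - 1) * (1 - q), 0)"
        using comm1[OF ev fq] v1 c3 q_def by simp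
      have qpn: "q powi z = 1 + of_int z * (q - 1) + (q - 1)^2 * P" using P(2) by (simp add: algebra_simps)
      have "of_int z * c * (1 - q) = c * (1 - q powi z) + f * (q - 1) * (1 - q)"
        unfolding qpn f_def by (simp add: algebra_simps power2_eq_square)
      then have "bs_comm k v u = bs_comm k w a1 \<otimes>\<^bsub>BS k\<^esub> bs_comm k v (bs_comm k (f,0) v)"
        using c1 c2 c4 by simp
      moreover have "(f,0) \<in> carrier (BS k)" using f by simp
      moreover have "bs_alpha k (f,0)" using alpha_iff f by simp
      ultimately show ?thesis by blast
    qed
    show "bs_tau k \<gamma> a1 u h b1" unfolding bs_tau_def using A1 A2 A3 A4 A5 by blast
  qed
qed

end

theorem corollary4p9:
  fixes k :: int
    and \<gamma> :: "rat \<times> int \<Rightarrow> rat \<times> int \<Rightarrow> rat \<times> int \<Rightarrow> rat \<times> int \<Rightarrow> bool"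
    and a1 b1 :: "rat \<times> int"
  assumes "k \<ge> 2"
    and "\<And>b. b \<in> bsAb k \<Longrightarrow> \<forall>n l m :: int.
           \<gamma> (b [^]\<^bsub>BS k\<^esub> n) (b [^]\<^bsub>BS k\<^esub> l) (b [^]\<^bsub>BS k\<^esub> m) b \<longleftrightarrow> n * l = m"
    and "a1 \<in> bsA k"
    and "b1 \<in> bsAb k"
  shows "\<forall>u\<in>carrier (BS k). \<forall>h\<in>carrier (BS k).
           bs_tau k \<gamma> a1 u h b1 \<longleftrightarrow>
           (\<exists>z :: int. u = a1 [^]\<^bsub>BS k\<^esub> z \<and> h = b1 [^]\<^bsub>BS k\<^esub> z)"
  using main_lemma[OF assms(1) assms(2) assms(3) assms(4)] by blast

end
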